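(* Let $M$ be a graded $R$-module and let $K$, $N$ and $\{K_i\mid i\in I\}$ be graded submodules of $M$. Then: (1) $qp\text{-}V_M^g(0)=qp.Spec_g(M)$ and $qp\text{-}V_M^g(M)=\emptyset$. (2) $\bigcap_{i\in I}qp\text{-}V_M^g(K_i)=qp\text{-}V_M^g\big((\sum_{i\in I}(K_i:_RM))M\big)$. (3) $qp\text{-}V_M^g(N)\cup qp\text{-}V_M^g(K)=qp\text{-}V_M^g(N\cap K)$.
   Context: $G$ is a group with identity $e$, $R=\bigoplus_{g\in G}R_g$ is a $G$-graded commutative ring with identity, $h(R)=\bigcup_{g\in G}R_g$, and $M$ is a graded unital $R$-module with set of homogeneous elements $h(M)$. For a graded ideal $I$ of $R$, $Gr(I)$ is the set of $r=\sum_g r_g\in R$ such that for each $g$ some power $r_g^{n_g}$ lies in $I$; it equals the intersection of all graded prime ideals of $R$ containing $I$. For a submodule $K$ of $M$, $(K:_RM)=\{r\in R: rM\subseteq K\}$. A graded prime submodule of $M$ is a proper graded submodule $P$ such that $r\in h(R)$, $m\in h(M)$, $rm\in P$ imply $m\in P$ or $r\in (P:_RM)$. For a graded submodule $K$, $Gr_M(K)$ is the intersection of all graded prime submodules of $M$ containing $K$ ($Gr_M(K)=M$ if there is none). A graded submodule $K$ satisfies the graded primeful property if for each graded prime ideal $p$ of $R$ with $(K:_RM)\subseteq p$ there is a graded prime submodule $P\supseteq K$ with $(P:_RM)=p$. A graded quasi-primary submodule of $M$ is a proper graded submodule $Q$ such that whenever $r\in h(R)$, $m\in h(M)$, $rm\in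 Q$, then $r\in Gr((Q:_RM))$ or $m\in Gr_M(Q)$. $qp.Spec_g(M)$ denotes the set of all graded quasi-primary submodules of $M$ satisfying the graded primeful property. For a graded submodule $K$ of $M$, $qp\text{-}V_M^g(K)=\{Q\in qp.Spec_g(M)\mid Gr((Q:_RM))\supseteq Gr((K:_RM))\}$. *)

theory Defs
  imports Complex_Main
begin

definition add_subgroup :: "'a::ab_group_add set \<Rightarrow> bool" where
  "add_subgroup A \<longleftrightarrow> 0 \<in> A \<and> (\<forall>x\<in>A. \<forall>y\<in>A. x + y \<in> A) \<and> (\<forall>x\<in>A. - x \<in> A)"

definition is_decomp :: "('g \<Rightarrow> 'a::ab_group_add set) \<Rightarrow> 'a \<Rightarrow> ('g \<Rightarrow> 'a) \<Rightarrow> bool" where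
  "is_decomp A x f \<longleftrightarrow> finite {g. f g \<noteq> 0} \<and> (\<forall>g. f g \<in> A g) \<and> x = (\<Sum>g\<in>{g. f g \<noteq> 0}. f g)"

definition is_dsum :: "('g \<Rightarrow> 'a::ab_group_add set) \<Rightarrow> bool" where
  "is_dsum A \<longleftrightarrow> (\<forall>g. add_subgroup (A g)) \<and> (\<forall>x. \<exists>!f. is_decomp A x f)"

definition gcomp :: "('g \<Rightarrow> 'a::ab_group_add set) \<Rightarrow> 'a \<Rightarrow> 'g \<Rightarrow> 'a" where
  "gcomp A x = (THE f. is_decomp A x f)"

definition hom :: "('g \<Rightarrow> 'a set) \<Rightarrow> 'a set" where
  "hom A = (\<Union>g. A g)"

definition graded_ring :: "('g::group_add \<Rightarrow> 'r::comm_ring_1 set) \<Rightarrow> bool" where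
  "graded_ring Rg \<longleftrightarrow> is_dsum Rg \<and> (\<forall>g h. \<forall>a\<in>Rg g. \<forall>b\<in>Rg h. a * b \<in> Rg (g + h))"

definition graded_module ::
  "('g::group_add \<Rightarrow> 'r::comm_ring_1 set) \<Rightarrow> ('g \<Rightarrow> 'm::ab_group_add set) \<Rightarrow> ('r \<Rightarrow> 'm \<Rightarrow> 'm) \<Rightarrow> bool" where
  "graded_module Rg Mg scale \<longleftrightarrow> module scale \<and> is_dsum Mg \<and>
     (\<forall>g h. \<forall>a\<in>Rg g. \<forall>m\<in>Mg h. scale a m \<in> Mg (g + h))"

definition is_ideal :: "'r::comm_ring_1 set \<Rightarrow> bool" where
  "is_ideal I \<longleftrightarrow> module.subspace ((*)) I"

definition graded_ideal :: "('g \<Rightarrow> 'r::comm_ring_1 set) \<Rightarrow> 'r set \<Rightarrow> bool" where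
  "graded_ideal Rg I \<longleftrightarrow> is_ideal I \<and> (\<forall>x\<in>I. \<forall>g. gcomp Rg x g \<in> I)"

definition graded_prime_ideal :: "('g \<Rightarrow> 'r::comm_ring_1 set) \<Rightarrow> 'r set \<Rightarrow> bool" where
  "graded_prime_ideal Rg p \<longleftrightarrow> graded_ideal Rg p \<and> p \<noteq> UNIV \<and>
     (\<forall>a\<in>hom Rg. \<forall>b\<in>hom Rg. a * b \<in> p \<longrightarrow> a \<in> p \<or> b \<in> p)"

definition graded_submodule ::
  "('g \<Rightarrow> 'm::ab_group_add set) \<Rightarrow> ('r::comm_ring_1 \<Rightarrow> 'm \<Rightarrow> 'm) \<Rightarrow> 'm set \<Rightarrow> bool" where
  "graded_submodule Mg scale N \<longleftrightarrow> module.subspace scale N \<and> (\<forall>x\<in>N. \<forall>g. gcomp Mg x g \<in> N)"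

definition colon :: "('r \<Rightarrow> 'm \<Rightarrow> 'm) \<Rightarrow> 'm set \<Rightarrow> 'r set" where
  "colon scale K = {r. \<forall>m. scale r m \<in> K}"

definition Gr :: "('g \<Rightarrow> 'r::comm_ring_1 set) \<Rightarrow> 'r set \<Rightarrow> 'r set" where
  "Gr Rg I = {r. \<forall>g. \<exists>n>0. (gcomp Rg r g) ^ n \<in> I}"

definition graded_prime_submodule ::
  "('g \<Rightarrow> 'r::comm_ring_1 set) \<Rightarrow> ('g \<Rightarrow> 'm::ab_group_add set) \<Rightarrow> ('r \<Rightarrow> 'm \<Rightarrow> 'm) \<Rightarrow> 'm set \<Rightarrow> bool" where
  "graded_prime_submodule Rg Mg scale P \<longleftrightarrow> graded_submodule Mg scale P \<and> P \<noteq> UNIV \<and>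
     (\<forall>r\<in>hom Rg. \<forall>m\<in>hom Mg. scale r m \<in> P \<longrightarrow> m \<in> P \<or> r \<in> colon scale P)"

definition GrM ::
  "('g \<Rightarrow> 'r::comm_ring_1 set) \<Rightarrow> ('g \<Rightarrow> 'm::ab_group_add set) \<Rightarrow> ('r \<Rightarrow> 'm \<Rightarrow> 'm) \<Rightarrow> 'm set \<Rightarrow> 'm set" where
  "GrM Rg Mg scale K = \<Inter>{P. graded_prime_submodule Rg Mg scale P \<and> K \<subseteq> P}"

definition graded_primeful ::
  "('g \<Rightarrow> 'r::comm_ring_1 set) \<Rightarrow> ('g \<Rightarrow> 'm::ab_group_add set) \<Rightarrow> ('r \<Rightarrow> 'm \<Rightarrow> 'm) \<Rightarrow> 'm set \<Rightarrow> bool" where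
  "graded_primeful Rg Mg scale K \<longleftrightarrow>
     (\<forall>p. graded_prime_ideal Rg p \<and> colon scale K \<subseteq> p \<longrightarrow>
        (\<exists>P. graded_prime_submodule Rg Mg scale P \<and> K \<subseteq> P \<and> colon scale P = p))"

definition graded_quasi_primary ::
  "('g \<Rightarrow> 'r::comm_ring_1 set) \<Rightarrow> ('g \<Rightarrow> 'm::ab_group_add set) \<Rightarrow> ('r \<Rightarrow> 'm \<Rightarrow> 'm) \<Rightarrow> 'm set \<Rightarrow> bool" where
  "graded_quasi_primary Rg Mg scale Q \<longleftrightarrow> graded_submodule Mg scale Q \<and> Q \<noteq> UNIV \<and>
     (\<forall>r\<in>hom Rg. \<forall>m\<in>hom Mg. scale r m \<in> Q \<longrightarrow>
        r \<in> Gr Rg (colon scale Q) \<or> m \<in> GrM Rg Mg scale Q)"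

definition qpSpec ::
  "('g \<Rightarrow> 'r::comm_ring_1 set) \<Rightarrow> ('g \<Rightarrow> 'm::ab_group_add set) \<Rightarrow> ('r \<Rightarrow> 'm \<Rightarrow> 'm) \<Rightarrow> 'm set set" where
  "qpSpec Rg Mg scale = {Q. graded_quasi_primary Rg Mg scale Q \<and> graded_primeful Rg Mg scale Q}"

definition qpV ::
  "('g \<Rightarrow> 'r::comm_ring_1 set) \<Rightarrow> ('g \<Rightarrow> 'm::ab_group_add set) \<Rightarrow> ('r \<Rightarrow> 'm \<Rightarrow> 'm) \<Rightarrow> 'm set \<Rightarrow> 'm set set" where
  "qpV Rg Mg scale K = {Q \<in> qpSpec Rg Mg scale. Gr Rg (colon scale Q) \<supseteq> Gr Rg (colon scale K)}"

definition ideal_sum :: "'i set \<Rightarrow> ('i \<Rightarrow> 'r::comm_ring_1 set) \<Rightarrow> 'r set" where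
  "ideal_sum I J = module.span ((*)) (\<Union>i\<in>I. J i)"

definition ideal_times_module :: "('r::comm_ring_1 \<Rightarrow> 'm::ab_group_add \<Rightarrow> 'm) \<Rightarrow> 'r set \<Rightarrow> 'm set" where
  "ideal_times_module scale J = module.span scale {scale r m | r m. r \<in> J}"

end

theory Submission
  imports Defs
begin



lemma module_mult: "module ((*) :: 'a::comm_ring_1 \<Rightarrow> 'a \<Rightarrow> 'a)"
  by unfold_locales (auto simp: algebra_simps)

lemma is_ideal_iff: "is_ideal (J :: 'a::comm_ring_1 set) \<longleftrightarrow>
   0 \<in> J \<and> (\<forall>x\<in>J. \<forall>y\<in>J. x + y \<in> J) \<and> (\<forall>c. \<forall>x\<in>J. c * x \<in> J)"
  unfolding is_ideal_def module.subspace_def[OF module_mult] by simp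

lemma is_decompI:
  assumes "finite T" "{g. f g \<noteq> 0} \<subseteq> T" "\<And>g. f g \<in> A g" "x = sum f T"
  shows "is_decomp A x f"
proof -
  have "sum f T = sum f {g. f g \<noteq> 0}"
    using assms by (intro sum.mono_neutral_right) auto
  thus ?thesis using assms finite_subset unfolding is_decomp_def by auto
qed

lemma is_decomp_sum:
  assumes "is_decomp A x f" "finite T" "{g. f g \<noteq> 0} \<subseteq> T"
  shows "x = sum f T"
proof -
  have "sum f T = sum f {g. f g \<noteq> 0}"
    using assms by (intro sum.mono_neutral_right) auto
  thus ?thesis using assms unfolding is_decomp_def by auto
qed

lemma gcomp_eq: "is_dsum A \<Longrightarrow> is_decomp A x f \<Longrightarrow> gcomp A x = f"
  unfolding gcomp_def is_dsum_def by (metis the1_equality)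

lemma gcomp_decomp: "is_dsum A \<Longrightarrow> is_decomp A x (gcomp A x)"
  unfolding gcomp_def is_dsum_def by (metis theI')

lemma gcomp_in: "is_dsum A \<Longrightarrow> gcomp A x g \<in> A g"
  using gcomp_decomp unfolding is_decomp_def by blast

lemma gcomp_fin: "is_dsum A \<Longrightarrow> finite {g. gcomp A x g \<noteq> 0}"
  using gcomp_decomp unfolding is_decomp_def by blast

lemma gcomp_sum_T: "is_dsum A \<Longrightarrow> finite T \<Longrightarrow> {g. gcomp A x g \<noteq> 0} \<subseteq> T \<Longrightarrow> x = sum (gcomp A x) T"
  using gcomp_decomp is_decomp_sum by blast

lemma gcomp_sum_supp: "is_dsum A \<Longrightarrow> x = (\<Sum>g\<in>{g. gcomp A x g \<noteq> 0}. gcomp A x g)"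
  using gcomp_sum_T gcomp_fin by blast

lemma dsum_zero: "is_dsum A \<Longrightarrow> 0 \<in> A g"
  unfolding is_dsum_def add_subgroup_def by blast

lemma dsum_add: "is_dsum A \<Longrightarrow> x \<in> A g \<Longrightarrow> y \<in> A g \<Longrightarrow> x + y \<in> A g"
  unfolding is_dsum_def add_subgroup_def by blast

lemma gcomp_hom: "is_dsum A \<Longrightarrow> z \<in> A d \<Longrightarrow> gcomp A z = (\<lambda>g. if g = d then z else 0)"
  by (rule gcomp_eq, assumption, rule is_decompI[where T="{d}"]) (auto simp: dsum_zero)

lemma gcomp_zero: "is_dsum A \<Longrightarrow> gcomp A 0 g = 0"
proof -
  assume d: "is_dsum A"
  have "gcomp A 0 = (\<lambda>g. if g = undefined then 0 else 0)" by (rule gcomp_hom[OF d dsum_zero[OF d]])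
  thus ?thesis by simp
qed

lemma gcomp_add: "is_dsum A \<Longrightarrow> gcomp A (x + y) g = gcomp A x g + gcomp A y g"
proof -
  assume d: "is_dsum A"
  let ?T = "{g. gcomp A x g \<noteq> 0} \<union> {g. gcomp A y g \<noteq> 0}"
  have "gcomp A (x + y) = (\<lambda>g. gcomp A x g + gcomp A y g)"
  proof (rule gcomp_eq[OF d], rule is_decompI[where T = ?T])
    show "finite ?T" using gcomp_fin[OF d] by auto
    show "{g. gcomp A x g + gcomp A y g \<noteq> 0} \<subseteq> ?T" by auto
    show "gcomp A x g + gcomp A y g \<in> A g" for g by (rule dsum_add[OF d gcomp_in[OF d] gcomp_in[OF d]])
    have fT: "finite ?T" using gcomp_fin[OF d] by auto
    have hx: "x = sum (gcomp A x) ?T" by (rule gcomp_sum_T[OF d fT]) blast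
    have hy: "y = sum (gcomp A y) ?T" by (rule gcomp_sum_T[OF d fT]) blast
    have "x + y = sum (gcomp A x) ?T + sum (gcomp A y) ?T" by (rule arg_cong2[where f="(+)", OF hx hy])
    also have "\<dots> = (\<Sum>g\<in>?T. gcomp A x g + gcomp A y g)" by (rule sum.distrib[symmetric])
    finally show "x + y = (\<Sum>g\<in>?T. gcomp A x g + gcomp A y g)" .
  qed
  thus ?thesis by simp
qed

lemma gcomp_sum: "is_dsum A \<Longrightarrow> gcomp A (sum f S) g = (\<Sum>i\<in>S. gcomp A (f i) g)"
  by (induction S rule: infinite_finite_induct) (auto simp: gcomp_zero gcomp_add)

lemma gcomp_act:
  fixes act :: "'r::ab_group_add \<Rightarrow> 'm::ab_group_add \<Rightarrow> 'm" and h :: "'g::group_add"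
  assumes dR: "is_dsum Rg" and dM: "is_dsum Mg"
    and deg: "\<And>g a. a \<in> Rg g \<Longrightarrow> act a m \<in> Mg (g + h)"
    and add: "\<And>a b. act (a + b) m = act a m + act b m"
  shows "gcomp Mg (act r m) k = act (gcomp Rg r (k + - h)) m"
proof -
  interpret ad: additive "\<lambda>a. act a m" by standard (rule add)
  let ?S = "{g. gcomp Rg r g \<noteq> 0}"
  let ?T = "(\<lambda>g. g + h) ` ?S"
  have "gcomp Mg (act r m) = (\<lambda>k. act (gcomp Rg r (k + - h)) m)"
  proof (rule gcomp_eq[OF dM], rule is_decompI[where T = ?T])
    show "finite ?T" using gcomp_fin[OF dR] by auto
    show "{k. act (gcomp Rg r (k + - h)) m \<noteq> 0} \<subseteq> ?T"
    proof
      fix k assume "k \<in> {k. act (gcomp Rg r (k + - h)) m \<noteq> 0}"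
      then have "gcomp Rg r (k + - h) \<noteq> 0" using ad.zero by auto
      moreover have "k = (k + - h) + h" by (simp add: add.assoc)
      ultimately show "k \<in> ?T" by blast
    qed
    show "act (gcomp Rg r (k + - h)) m \<in> Mg k" for k
      using deg[OF gcomp_in[OF dR, of r "k + - h"]] by (simp add: add.assoc)
    have inj: "inj_on (\<lambda>g. g + h) ?S" by (auto simp: inj_on_def)
    have "(\<Sum>k\<in>?T. act (gcomp Rg r (k + - h)) m) = (\<Sum>g\<in>?S. act (gcomp Rg r (g + h + - h)) m)"
      by (subst sum.reindex[OF inj]) auto
    also have "\<dots> = (\<Sum>g\<in>?S. act (gcomp Rg r g) m)" by (simp add: add.assoc)
    also have "\<dots> = act (\<Sum>g\<in>?S. gcomp Rg r g) m" by (rule ad.sum[symmetric])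
    also have "\<dots> = act r m" using gcomp_sum_supp[OF dR, of r] by simp
    finally show "act r m = (\<Sum>k\<in>?T. act (gcomp Rg r (k + - h)) m)" by simp
  qed
  thus ?thesis by simp
qed

lemma ideal_avoid_prime:
  fixes I :: "'a::comm_ring_1 set"
  assumes I: "is_ideal I" and y: "\<forall>n>0. y^n \<notin> I"
  shows "\<exists>q. is_ideal q \<and> I \<subseteq> q \<and> (\<forall>n>0. y^n \<notin> q) \<and> (\<forall>a b. a*b \<in> q \<longrightarrow> a \<in> q \<or> b \<in> q)"
proof -
  define F where "F = {J. is_ideal J \<and> I \<subseteq> J \<and> (\<forall>n>0. y^n \<notin> J)}"
  have "\<exists>M\<in>F. \<forall>X\<in>F. M \<subseteq> X \<longrightarrow> X = M"
  proof (rule subset_Zorn_nonempty)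
    have "I \<in> F" unfolding F_def using I y by simp
    then show "F \<noteq> {}" by blast
    fix C assume C: "C \<noteq> {}" "subset.chain F C"
    have CF: "C \<subseteq> F" and tot: "\<And>A B. A \<in> C \<Longrightarrow> B \<in> C \<Longrightarrow> A \<subseteq> B \<or> B \<subseteq> A"
      using C(2) unfolding subset.chain_def by auto
    have CI: "\<And>A. A \<in> C \<Longrightarrow> 0 \<in> A \<and> (\<forall>x\<in>A. \<forall>y\<in>A. x + y \<in> A) \<and> (\<forall>c. \<forall>x\<in>A. c * x \<in> A)"
      using CF unfolding F_def is_ideal_iff by blast
    have "is_ideal (\<Union>C)"
      unfolding is_ideal_iff
    proof (intro conjI ballI allI)
      obtain A where A: "A \<in> C" using C(1) by blast
      then have "0 \<in> A" using CI by blast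
      then show "0 \<in> \<Union>C" using A by blast
    next
      fix a b assume "a \<in> \<Union>C" "b \<in> \<Union>C"
      then obtain A B where AB: "A \<in> C" "B \<in> C" "a \<in> A" "b \<in> B" by blast
      show "a + b \<in> \<Union>C"
      proof (cases "A \<subseteq> B")
        case True
        then have "a + b \<in> B" using AB CI[OF AB(2)] by blast
        then show ?thesis using AB by blast
      next
        case False then have "B \<subseteq> A" using tot AB by blast
        then have "a + b \<in> A" using AB CI[OF AB(1)] by blast
        then show ?thesis using AB by blast
      qed
    next
      fix c a assume "a \<in> \<Union>C"
      then obtain A where A: "A \<in> C" "a \<in> A" by blast
      then have "c * a \<in> A" using CI[OF A(1)] by blast
      then show "c * a \<in> \<Union>C" using A by blast
    qed
    moreover have "I \<subseteq> \<Union>C"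
    proof -
      obtain A where A: "A \<in> C" using C(1) by blast
      then have "I \<subseteq> A" using CF unfolding F_def by blast
      then show ?thesis using A by blast
    qed
    moreover have "\<forall>n>0. y^n \<notin> \<Union>C"
    proof (intro allI impI)
      fix n :: nat assume n: "n > 0"
      show "y^n \<notin> \<Union>C"
      proof
        assume "y^n \<in> \<Union>C"
        then obtain A where A: "A \<in> C" "y^n \<in> A" by blast
        then have "\<forall>n>0. y^n \<notin> A" using CF unfolding F_def by blast
        then show False using A n by blast
      qed
    qed
    ultimately show "\<Union>C \<in> F" unfolding F_def by simp
  qed
  then obtain q where q: "q \<in> F" and mx: "\<forall>X\<in>F. q \<subseteq> X \<longrightarrow> X = q" by blast
  have qF: "is_ideal q" "I \<subseteq> q" "\<forall>n>0. y^n \<notin> q" using q unfolding F_def by auto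
  have qi: "0 \<in> q" "\<And>a b. a \<in> q \<Longrightarrow> b \<in> q \<Longrightarrow> a + b \<in> q" "\<And>c a. a \<in> q \<Longrightarrow> c * a \<in> q"
    using qF(1) unfolding is_ideal_iff by blast+
  have ext: "\<exists>n>0. \<exists>u r. u \<in> q \<and> y^n = u + r * c" if c: "c \<notin> q" for c
  proof (rule ccontr)
    define J where "J = {u + r * c | u r. u \<in> q}"
    assume nx: "\<not> ?thesis"
    have "is_ideal J" unfolding is_ideal_iff
    proof (intro conjI ballI allI)
      have "(0::'a) = 0 + 0 * c" by simp
      then show "0 \<in> J" unfolding J_def using qi(1) by blast
    next
      fix a b assume "a \<in> J" "b \<in> J"
      then obtain u r v s where uv: "u \<in> q" "v \<in> q" "a = u + r * c" "b = v + s * c" unfolding J_def by blast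
      then have "a + b = (u + v) + (r + s) * c" by (simp add: algebra_simps)
      moreover have "u + v \<in> q" using qi(2) uv by blast
      ultimately show "a + b \<in> J" unfolding J_def by blast
    next
      fix d a assume "a \<in> J"
      then obtain u r where ur: "u \<in> q" "a = u + r * c" unfolding J_def by blast
      then have "d * a = d * u + (d * r) * c" by (simp add: algebra_simps)
      moreover have "d * u \<in> q" using qi(3) ur by blast
      ultimately show "d * a \<in> J" unfolding J_def by blast
    qed
    moreover have qJ: "q \<subseteq> J"
    proof
      fix u assume u: "u \<in> q"
      have "u = u + 0 * c" by simp
      then show "u \<in> J" unfolding J_def using u by blast
    qed
    moreover have "I \<subseteq> J" using qF(2) qJ by blast
    moreover have "\<forall>n>0. y^n \<notin> J" using nx unfolding J_def by blast
    ultimately have "J \<in> F" unfolding F_def by simp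
    then have "J = q" using mx qJ by blast
    moreover have "c \<in> J"
    proof -
      have "c = 0 + 1 * c" by simp
      then show ?thesis unfolding J_def using qi(1) by blast
    qed
    ultimately show False using c by blast
  qed
  have "a \<in> q \<or> b \<in> q" if ab: "a * b \<in> q" for a b
  proof (rule ccontr)
    assume nab: "\<not> (a \<in> q \<or> b \<in> q)"
    obtain i u r where i: "i > 0" "u \<in> q" "y^i = u + r * a" using ext nab by blast
    obtain j v s where j: "j > 0" "v \<in> q" "y^j = v + s * b" using ext nab by blast
    have "y^(i+j) = y^i * y^j" by (rule power_add)
    also have "\<dots> = (v + s * b) * u + (r * a) * v + (r * s) * (a * b)"
      unfolding i(3) j(3) by (simp add: algebra_simps)
    also have "\<dots> \<in> q" using qi(2) qi(3)[OF i(2)] qi(3)[OF j(2)] qi(3)[OF ab] by blast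
    finally show False using qF(3) i(1) by auto
  qed
  thus ?thesis using qF by blast
qed




locale gctx =
  fixes Rg :: "'g::group_add \<Rightarrow> 'r::comm_ring_1 set" and Mg :: "'g \<Rightarrow> 'm::ab_group_add set"
    and scale :: "'r \<Rightarrow> 'm \<Rightarrow> 'm"
  assumes gr: "graded_ring Rg" and gm: "graded_module Rg Mg scale"
begin

lemma md: "module scale" using gm unfolding graded_module_def by blast
lemma dR: "is_dsum Rg" using gr unfolding graded_ring_def by blast
lemma dM: "is_dsum Mg" using gm unfolding graded_module_def by blast
lemma mulR: "a \<in> Rg g \<Longrightarrow> b \<in> Rg h \<Longrightarrow> a * b \<in> Rg (g + h)"
  using gr unfolding graded_ring_def by blast
lemma scM: "a \<in> Rg g \<Longrightarrow> m \<in> Mg h \<Longrightarrow> scale a m \<in> Mg (g + h)"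
  using gm unfolding graded_module_def by blast

interpretation M: module scale by (rule md)
interpretation RR: module "(*) :: 'r \<Rightarrow> 'r \<Rightarrow> 'r" by (rule module_mult)

lemma one_R0: "(1::'r) \<in> Rg 0"
proof -
  let ?e = "gcomp Rg (1::'r)"
  have A: "?e g * x = 0" if x: "x \<in> Rg h" and g: "g \<noteq> 0" for g h x
  proof -
    have "gcomp Rg (1 * x) (g + h) = gcomp Rg 1 (g + h + - h) * x"
      by (rule gcomp_act[OF dR dR, where act = "\<lambda>a b. a * b" and m = x and r = 1 and h = h and k = "g + h"])
         (auto intro: mulR x simp: algebra_simps)
    moreover have "g + h \<noteq> h" using g by (metis add.left_neutral add_right_cancel)
    then have "gcomp Rg x (g + h) = 0" using gcomp_hom[OF dR x] by simp
    ultimately show ?thesis by (simp add: add.assoc)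
  qed
  have B: "?e g = 0" if g: "g \<noteq> 0" for g
  proof -
    let ?S = "{g. ?e g \<noteq> 0}"
    have s1: "(1::'r) = (\<Sum>h\<in>?S. ?e h)" by (rule gcomp_sum_supp[OF dR])
    have "?e g = ?e g * (\<Sum>h\<in>?S. ?e h)" by (subst s1[symmetric]) simp
    also have "\<dots> = (\<Sum>h\<in>?S. ?e g * ?e h)" by (rule sum_distrib_left)
    also have "\<dots> = 0" using A[OF gcomp_in[OF dR] g] by simp
    finally show ?thesis .
  qed
  have "(1::'r) = sum ?e {0}" by (rule gcomp_sum_T[OF dR]) (use B in auto)
  then have "(1::'r) = ?e 0" by simp
  thus ?thesis using gcomp_in[OF dR, of 1 0] by simp
qed

lemma hom_iff: "x \<in> hom A \<longleftrightarrow> (\<exists>d. x \<in> A d)" unfolding hom_def by blast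

lemma pow_hom: "z \<in> hom Rg \<Longrightarrow> z ^ n \<in> hom Rg"
proof (induction n)
  case 0 then show ?case using one_R0 by (auto simp: hom_iff)
next
  case (Suc n)
  then obtain d e where "z ^ n \<in> Rg d" "z \<in> Rg e" by (auto simp: hom_iff)
  then have "z * z ^ n \<in> Rg (e + d)" by (rule mulR[rotated])
  then show ?case by (auto simp: hom_iff)
qed

lemma mult_hom: "a \<in> hom Rg \<Longrightarrow> b \<in> hom Rg \<Longrightarrow> a * b \<in> hom Rg"
  unfolding hom_iff using mulR by metis

lemma scale_hom: "a \<in> hom Rg \<Longrightarrow> m \<in> hom Mg \<Longrightarrow> scale a m \<in> hom Mg"
  unfolding hom_iff using scM by metis

lemma Gr_hom: "z \<in> hom Rg \<Longrightarrow> 0 \<in> I \<Longrightarrow> z \<in> Gr Rg I \<longleftrightarrow> (\<exists>n>0. z ^ n \<in> I)"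
proof -
  assume z: "z \<in> hom Rg" and I: "0 \<in> I"
  then obtain d where d: "z \<in> Rg d" by (auto simp: hom_iff)
  have "z \<in> Gr Rg I \<longleftrightarrow> (\<forall>g. \<exists>n>0. (if g = d then z else 0) ^ n \<in> I)"
    unfolding Gr_def using gcomp_hom[OF dR d] by simp
  also have "\<dots> \<longleftrightarrow> (\<exists>n>0. z ^ n \<in> I)"
  proof
    assume "\<forall>g. \<exists>n>0. (if g = d then z else 0) ^ n \<in> I"
    then have "\<exists>n>0. (if d = d then z else 0) ^ n \<in> I" by (rule spec)
    then show "\<exists>n>0. z ^ n \<in> I" by simp
  next
    assume H: "\<exists>n>0. z ^ n \<in> I"
    show "\<forall>g. \<exists>n>0. (if g = d then z else 0) ^ n \<in> I"
    proof
      fix g show "\<exists>n>0. (if g = d then z else 0) ^ n \<in> I"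
      proof (cases "g = d")
        case True then show ?thesis using H by simp
      next
        case False then have "(if g = d then z else 0) ^ 1 \<in> I" using I by simp
        then show ?thesis by blast
      qed
    qed
  qed
  finally show ?thesis .
qed

lemma Gr_mono: "I \<subseteq> J \<Longrightarrow> Gr Rg I \<subseteq> Gr Rg J"
  unfolding Gr_def by blast

lemma colon_mono: "K \<subseteq> L \<Longrightarrow> colon scale K \<subseteq> colon scale L"
  unfolding colon_def by blast

lemma colon_zero: "M.subspace K \<Longrightarrow> 0 \<in> colon scale K"
  unfolding colon_def using M.subspace_0 by simp

lemma colon_mult: "x \<in> colon scale K \<Longrightarrow> y * x \<in> colon scale K"
proof -
  assume x: "x \<in> colon scale K"
  have "scale (y * x) m \<in> K" for m
  proof -
    have eq: "scale (y * x) m = scale x (scale y m)" by (simp add: mult.commute)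
    have mem: "scale x (scale y m) \<in> K" using x unfolding colon_def by blast
    show ?thesis unfolding eq by (rule mem)
  qed
  then show ?thesis unfolding colon_def by blast
qed

lemma colon_ideal:
  assumes K: "M.subspace K" shows "RR.subspace (colon scale K)"
proof (rule RR.subspaceI)
  show "0 \<in> colon scale K" by (rule colon_zero[OF K])
next
  fix x y assume "x \<in> colon scale K" "y \<in> colon scale K"
  then show "x + y \<in> colon scale K" unfolding colon_def
    using M.subspace_add[OF K] by (simp add: M.scale_left_distrib)
next
  fix c x assume "x \<in> colon scale K" then show "c * x \<in> colon scale K" by (rule colon_mult)
qed

lemma colon_is_ideal: "M.subspace K \<Longrightarrow> is_ideal (colon scale K)"
  using colon_ideal unfolding is_ideal_def .

lemma colon_from_hom:
  assumes K: "M.subspace K" and h: "\<And>h m. m \<in> Mg h \<Longrightarrow> scale y m \<in> K"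
  shows "y \<in> colon scale K"
  unfolding colon_def
proof
  show "\<forall>m. scale y m \<in> K"
  proof
    fix m
    have e: "m = (\<Sum>g\<in>{g. gcomp Mg m g \<noteq> 0}. gcomp Mg m g)" by (rule gcomp_sum_supp[OF dM])
    have "scale y m = scale y (\<Sum>g\<in>{g. gcomp Mg m g \<noteq> 0}. gcomp Mg m g)" by (rule arg_cong[OF e])
    also have "\<dots> = (\<Sum>g\<in>{g. gcomp Mg m g \<noteq> 0}. scale y (gcomp Mg m g))" by (rule M.scale_sum_right)
    also have "\<dots> \<in> K" by (rule M.subspace_sum[OF K]) (use h gcomp_in[OF dM] in blast)
    finally show "scale y m \<in> K" .
  qed
qed

lemma in_from_comps:
  assumes K: "RR.subspace J" and h: "\<And>g. gcomp Rg r g \<in> J"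
  shows "r \<in> J"
proof -
  have "r = (\<Sum>g\<in>{g. gcomp Rg r g \<noteq> 0}. gcomp Rg r g)" by (rule gcomp_sum_supp[OF dR])
  also have "\<dots> \<in> J" by (rule RR.subspace_sum[OF K]) (use h in blast)
  finally show ?thesis .
qed

lemma exists_hom_notin:
  assumes "graded_submodule Mg scale P" "P \<noteq> UNIV"
  shows "\<exists>h m. m \<in> Mg h \<and> m \<notin> P"
proof (rule ccontr)
  assume "\<not> ?thesis"
  then have c: "\<And>h m. m \<in> Mg h \<Longrightarrow> m \<in> P" by blast
  have sP: "M.subspace P" using assms unfolding graded_submodule_def by blast
  have "m \<in> P" for m
  proof -
    have "m = (\<Sum>g\<in>{g. gcomp Mg m g \<noteq> 0}. gcomp Mg m g)" by (rule gcomp_sum_supp[OF dM])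
    also have "\<dots> \<in> P" by (rule M.subspace_sum[OF sP]) (use c gcomp_in[OF dM] in blast)
    finally show ?thesis .
  qed
  then show False using assms(2) by blast
qed

lemma colon_graded:
  assumes K: "graded_submodule Mg scale K" and x: "x \<in> colon scale K"
  shows "gcomp Rg x g \<in> colon scale K"
proof (rule colon_from_hom)
  show sK: "M.subspace K" using K unfolding graded_submodule_def by blast
  fix h m assume m: "m \<in> Mg h"
  have "gcomp Mg (scale x m) (g + h) = scale (gcomp Rg x (g + h + - h)) m"
    by (rule gcomp_act[OF dR dM, where act = scale and m = m and r = x and h = h and k = "g + h"])
       (auto intro: scM m simp: M.scale_left_distrib)
  then have e: "gcomp Mg (scale x m) (g + h) = scale (gcomp Rg x g) m" by (simp add: add.assoc)
  have "scale x m \<in> K" using x unfolding colon_def by blast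
  then have "gcomp Mg (scale x m) (g + h) \<in> K" using K unfolding graded_submodule_def by blast
  then show "scale (gcomp Rg x g) m \<in> K" unfolding e .
qed

lemma prime_pow:
  assumes P: "graded_prime_submodule Rg Mg scale P" and z: "z \<in> hom Rg"
    and n: "z ^ n \<in> colon scale P"
  shows "z \<in> colon scale P"
proof (rule ccontr)
  assume nz: "z \<notin> colon scale P"
  have gP: "graded_submodule Mg scale P" "P \<noteq> UNIV"
    and pr: "\<And>r m. r \<in> hom Rg \<Longrightarrow> m \<in> hom Mg \<Longrightarrow> scale r m \<in> P \<Longrightarrow> m \<in> P \<or> r \<in> colon scale P"
    using P unfolding graded_prime_submodule_def by blast+
  obtain h m where m: "m \<in> Mg h" "m \<notin> P" using exists_hom_notin[OF gP] by blast
  have "\<forall>m. m \<in> hom Mg \<and> m \<notin> P \<longrightarrow> scale (z ^ k) m \<notin> P" for k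
  proof (induction k)
    case 0 then show ?case by simp
  next
    case (Suc k)
    show ?case
    proof (intro allI impI)
      fix m assume m: "m \<in> hom Mg \<and> m \<notin> P"
      have "scale (z ^ k) m \<in> hom Mg" using scale_hom pow_hom z m by blast
      moreover have "scale (z ^ k) m \<notin> P" using Suc m by blast
      ultimately have "scale z (scale (z ^ k) m) \<notin> P" using pr z nz by blast
      then show "scale (z ^ Suc k) m \<notin> P" by simp
    qed
  qed
  moreover have "m \<in> hom Mg" using m by (auto simp: hom_iff)
  ultimately have "scale (z ^ n) m \<notin> P" using m by blast
  then show False using n unfolding colon_def by blast
qed

end



context gctx begin

interpretation M: module scale by (rule md)
interpretation RR: module "(*) :: 'r \<Rightarrow> 'r \<Rightarrow> 'r" by (rule module_mult)

lemma avoid: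
  assumes Q: "graded_submodule Mg scale Q" and pf: "graded_primeful Rg Mg scale Q"
    and y: "y \<in> hom Rg" and ny: "\<forall>n>0. y^n \<notin> colon scale Q"
  shows "\<exists>P. graded_prime_submodule Rg Mg scale P \<and> Q \<subseteq> P \<and> y \<notin> colon scale P"
proof -
  have sQ: "M.subspace Q" using Q unfolding graded_submodule_def by blast
  obtain q where q: "is_ideal q" "colon scale Q \<subseteq> q" "\<forall>n>0. y^n \<notin> q" "\<forall>a b. a*b \<in> q \<longrightarrow> a \<in> q \<or> b \<in> q"
    using ideal_avoid_prime[OF colon_is_ideal[OF sQ] ny] by blast
  have qi: "0 \<in> q" "\<And>a b. a \<in> q \<Longrightarrow> b \<in> q \<Longrightarrow> a + b \<in> q" "\<And>c a. a \<in> q \<Longrightarrow> c * a \<in> q"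
    using q(1) unfolding is_ideal_iff by blast+
  have qsub: "RR.subspace q" using q(1) unfolding is_ideal_def .
  define p where "p = {r. \<forall>g. gcomp Rg r g \<in> q}"
  have hp: "z \<in> p \<longleftrightarrow> z \<in> q" if z: "z \<in> Rg d" for z d
  proof
    assume "z \<in> p"
    then have "gcomp Rg z d \<in> q" unfolding p_def by blast
    then show "z \<in> q" using gcomp_hom[OF dR z] by simp
  next
    assume "z \<in> q"
    then show "z \<in> p" unfolding p_def using gcomp_hom[OF dR z] qi(1) by simp
  qed
  have pI: "is_ideal p" unfolding is_ideal_iff
  proof (intro conjI ballI allI)
    show "0 \<in> p" unfolding p_def using gcomp_zero[OF dR] qi(1) by simp
  next
    fix a b assume ab: "a \<in> p" "b \<in> p"
    show "a + b \<in> p" unfolding p_def mem_Collect_eq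
    proof
      fix g
      have "gcomp Rg a g \<in> q" "gcomp Rg b g \<in> q" using ab unfolding p_def by blast+
      then have "gcomp Rg a g + gcomp Rg b g \<in> q" by (rule qi(2))
      then show "gcomp Rg (a + b) g \<in> q" by (simp only: gcomp_add[OF dR])
    qed
  next
    fix c r assume r: "r \<in> p"
    show "c * r \<in> p" unfolding p_def mem_Collect_eq
    proof (rule allI)
      fix g
      let ?S = "{h. gcomp Rg r h \<noteq> 0}"
      have e: "r = (\<Sum>h\<in>?S. gcomp Rg r h)" by (rule gcomp_sum_supp[OF dR])
      have "c * r = c * (\<Sum>h\<in>?S. gcomp Rg r h)" by (rule arg_cong[OF e])
      also have "\<dots> = (\<Sum>h\<in>?S. c * gcomp Rg r h)" by (rule sum_distrib_left)
      finally have "gcomp Rg (c * r) g = gcomp Rg (\<Sum>h\<in>?S. c * gcomp Rg r h) g" by simp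
      also have "\<dots> = (\<Sum>h\<in>?S. gcomp Rg (c * gcomp Rg r h) g)" by (rule gcomp_sum[OF dR])
      also have "\<dots> \<in> q"
      proof (rule RR.subspace_sum[OF qsub])
        fix h assume "h \<in> ?S"
        have "gcomp Rg (c * gcomp Rg r h) g = gcomp Rg c (g + - h) * gcomp Rg r h"
          by (rule gcomp_act[OF dR dR, where act = "\<lambda>a b. a * b" and m = "gcomp Rg r h" and r = c and h = h and k = g])
             (erule mulR[OF _ gcomp_in[OF dR]], simp add: distrib_right)
        moreover have "gcomp Rg c (g + - h) * gcomp Rg r h \<in> q"
          using qi(3) r unfolding p_def by blast
        ultimately show "gcomp Rg (c * gcomp Rg r h) g \<in> q" by simp
      qed
      finally show "gcomp Rg (c * r) g \<in> q" .
    qed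
  qed
  have pg: "gcomp Rg r g \<in> p" if "r \<in> p" for r g
  proof -
    have "gcomp Rg r g \<in> q" using that unfolding p_def by blast
    then show ?thesis by (simp only: hp[OF gcomp_in[OF dR, of r g]])
  qed
  have yd: "y \<notin> p"
  proof -
    obtain d where d: "y \<in> Rg d" using y by (auto simp: hom_iff)
    have "y ^ 1 \<notin> q" using spec[OF q(3), of 1] by simp
    then show ?thesis using hp[OF d] by simp
  qed
  have pprime: "a \<in> p \<or> b \<in> p" if a: "a \<in> hom Rg" and b: "b \<in> hom Rg" and ab: "a * b \<in> p" for a b
  proof -
    obtain d1 d2 where d: "a \<in> Rg d1" "b \<in> Rg d2" using a b by (auto simp: hom_iff)
    have "a * b \<in> q" using hp[OF mulR[OF d]] ab by blast
    then have "a \<in> q \<or> b \<in> q" using q(4) by blast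
    then show ?thesis using hp[OF d(1)] hp[OF d(2)] by blast
  qed
  have c1: "\<forall>x\<in>p. \<forall>g. gcomp Rg x g \<in> p" using pg by blast
  have c2: "p \<noteq> UNIV" using yd by blast
  have c3: "\<forall>a\<in>hom Rg. \<forall>b\<in>hom Rg. a * b \<in> p \<longrightarrow> a \<in> p \<or> b \<in> p" using pprime by blast
  have gp: "graded_prime_ideal Rg p"
    unfolding graded_prime_ideal_def graded_ideal_def using pI c1 c2 c3 by blast
  have cp: "colon scale Q \<subseteq> p"
  proof
    fix r assume "r \<in> colon scale Q"
    then have "gcomp Rg r g \<in> colon scale Q" for g using colon_graded[OF Q] by blast
    then show "r \<in> p" unfolding p_def using q(2) by blast
  qed
  obtain P where "graded_prime_submodule Rg Mg scale P" "Q \<subseteq> P" "colon scale P = p"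
    using pf gp cp unfolding graded_primeful_def by blast
  then show ?thesis using yd by blast
qed

lemma qp_prime:
  assumes qp: "graded_quasi_primary Rg Mg scale Q" and pf: "graded_primeful Rg Mg scale Q"
    and x: "x \<in> hom Rg" and y: "y \<in> hom Rg" and xy: "x * y \<in> colon scale Q"
  shows "(\<exists>n>0. x^n \<in> colon scale Q) \<or> (\<exists>n>0. y^n \<in> colon scale Q)"
proof (rule ccontr)
  assume nn: "\<not> ?thesis"
  have Q: "graded_submodule Mg scale Q"
    and qpc: "\<And>r m. r \<in> hom Rg \<Longrightarrow> m \<in> hom Mg \<Longrightarrow> scale r m \<in> Q \<Longrightarrow>
                 r \<in> Gr Rg (colon scale Q) \<or> m \<in> GrM Rg Mg scale Q"
    using qp unfolding graded_quasi_primary_def by blast+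
  have sQ: "M.subspace Q" using Q unfolding graded_submodule_def by blast
  have ny: "\<forall>n>0. y^n \<notin> colon scale Q" using nn by blast
  obtain P where P: "graded_prime_submodule Rg Mg scale P" "Q \<subseteq> P" "y \<notin> colon scale P"
    using avoid[OF Q pf y ny] by blast
  have sP: "M.subspace P" using P(1) unfolding graded_prime_submodule_def graded_submodule_def by blast
  have "y \<in> colon scale P"
  proof (rule colon_from_hom[OF sP])
    fix h m assume m: "m \<in> Mg h"
    have mh: "scale y m \<in> hom Mg" using scale_hom[OF y] m by (auto simp: hom_iff)
    have "scale x (scale y m) \<in> Q" using xy unfolding colon_def by simp
    then have "x \<in> Gr Rg (colon scale Q) \<or> scale y m \<in> GrM Rg Mg scale Q" using qpc x mh by blast
    moreover have "x \<notin> Gr Rg (colon scale Q)" using Gr_hom[OF x colon_zero[OF sQ]] nn by blast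
    moreover have "GrM Rg Mg scale Q \<subseteq> P" unfolding GrM_def using P(1,2) by blast
    ultimately show "scale y m \<in> P" by blast
  qed
  then show False using P(3) by blast
qed

lemma qpSpecD:
  assumes "Q \<in> qpSpec Rg Mg scale"
  shows "graded_quasi_primary Rg Mg scale Q" "graded_primeful Rg Mg scale Q"
    "graded_submodule Mg scale Q" "M.subspace Q" "Q \<noteq> UNIV"
  using assms unfolding qpSpec_def graded_quasi_primary_def graded_submodule_def by blast+

lemma part1a: "qpV Rg Mg scale {0} = qpSpec Rg Mg scale"
proof -
  have "Gr Rg (colon scale {0}) \<subseteq> Gr Rg (colon scale Q)" if Q: "Q \<in> qpSpec Rg Mg scale" for Q
  proof -
    have "0 \<in> Q" using M.subspace_0[OF qpSpecD(4)[OF Q]] .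
    then have "{0} \<subseteq> Q" by blast
    then show ?thesis by (intro Gr_mono colon_mono)
  qed
  then show ?thesis unfolding qpV_def by blast
qed

lemma part1b: "qpV Rg Mg scale UNIV = {}"
proof -
  have False if Q: "Q \<in> qpSpec Rg Mg scale" and G: "Gr Rg (colon scale UNIV) \<subseteq> Gr Rg (colon scale Q)" for Q
  proof -
    have h1: "(1::'r) \<in> hom Rg" using one_R0 by (auto simp: hom_iff)
    have "colon scale UNIV = UNIV" unfolding colon_def by simp
    moreover have "\<exists>n>0. (1::'r) ^ n \<in> UNIV" by (rule exI[of _ 1]) simp
    then have "(1::'r) \<in> Gr Rg UNIV" using Gr_hom[OF h1 UNIV_I] by blast
    ultimately have "(1::'r) \<in> Gr Rg (colon scale UNIV)" by simp
    then have "(1::'r) \<in> Gr Rg (colon scale Q)" using G by blast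
    then obtain n where "n > 0" "(1::'r) ^ n \<in> colon scale Q"
      using Gr_hom[OF h1 colon_zero[OF qpSpecD(4)[OF Q]]] by blast
    then have "\<forall>m. m \<in> Q" unfolding colon_def by simp
    then show False using qpSpecD(5)[OF Q] by blast
  qed
  then show ?thesis unfolding qpV_def by blast
qed

lemma part3:
  assumes N: "graded_submodule Mg scale N" and K: "graded_submodule Mg scale K"
  shows "qpV Rg Mg scale N \<union> qpV Rg Mg scale K = qpV Rg Mg scale (N \<inter> K)"
proof (rule equalityI)
  have "colon scale (N \<inter> K) \<subseteq> colon scale N" "colon scale (N \<inter> K) \<subseteq> colon scale K"
    by (rule colon_mono, blast)+
  then have "Gr Rg (colon scale (N \<inter> K)) \<subseteq> Gr Rg (colon scale N)" "Gr Rg (colon scale (N \<inter> K)) \<subseteq> Gr Rg (colon scale K)"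
    by (auto dest: Gr_mono)
  then show "qpV Rg Mg scale N \<union> qpV Rg Mg scale K \<subseteq> qpV Rg Mg scale (N \<inter> K)"
    unfolding qpV_def by blast
next
  show "qpV Rg Mg scale (N \<inter> K) \<subseteq> qpV Rg Mg scale N \<union> qpV Rg Mg scale K"
  proof
    fix Q assume QV: "Q \<in> qpV Rg Mg scale (N \<inter> K)"
    then have Q: "Q \<in> qpSpec Rg Mg scale" and G: "Gr Rg (colon scale (N \<inter> K)) \<subseteq> Gr Rg (colon scale Q)"
      unfolding qpV_def by blast+
    show "Q \<in> qpV Rg Mg scale N \<union> qpV Rg Mg scale K"
    proof (rule ccontr)
      assume nQ: "Q \<notin> qpV Rg Mg scale N \<union> qpV Rg Mg scale K"
      then obtain r where r: "r \<in> Gr Rg (colon scale N)" "r \<notin> Gr Rg (colon scale Q)"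
        using Q unfolding qpV_def by blast
      then obtain g where g: "\<not> (\<exists>n>0. gcomp Rg r g ^ n \<in> colon scale Q)"
        unfolding Gr_def by blast
      obtain a where a: "a > 0" "gcomp Rg r g ^ a \<in> colon scale N" using r(1) unfolding Gr_def by blast
      obtain s where s: "s \<in> Gr Rg (colon scale K)" "s \<notin> Gr Rg (colon scale Q)"
        using Q nQ unfolding qpV_def by blast
      then obtain h where h: "\<not> (\<exists>n>0. gcomp Rg s h ^ n \<in> colon scale Q)"
        unfolding Gr_def by blast
      obtain b where b: "b > 0" "gcomp Rg s h ^ b \<in> colon scale K" using s(1) unfolding Gr_def by blast
      define x where "x = gcomp Rg r g ^ a"
      define y where "y = gcomp Rg s h ^ b"
      have xh: "x \<in> hom Rg" unfolding x_def by (rule pow_hom) (use gcomp_in[OF dR] in \<open>auto simp: hom_iff\<close>)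
      have yh: "y \<in> hom Rg" unfolding y_def by (rule pow_hom) (use gcomp_in[OF dR] in \<open>auto simp: hom_iff\<close>)
      have "y * x \<in> colon scale N" using colon_mult a(2) unfolding x_def by blast
      then have xyN: "x * y \<in> colon scale N" by (simp add: mult.commute)
      have xyK: "x * y \<in> colon scale K" using colon_mult b(2) unfolding y_def by blast
      have "x * y \<in> colon scale (N \<inter> K)" using xyN xyK unfolding colon_def by blast
      moreover have sNK: "M.subspace (N \<inter> K)" using N K unfolding graded_submodule_def
        by (intro M.subspace_inter) blast+
      ultimately have "x * y \<in> Gr Rg (colon scale (N \<inter> K))"
        using Gr_hom[OF mult_hom[OF xh yh] colon_zero[OF sNK]] by (metis power_one_right zero_less_one)
      then have "x * y \<in> Gr Rg (colon scale Q)" using G by blast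
      then obtain k where k: "k > 0" "(x * y) ^ k \<in> colon scale Q"
        using Gr_hom[OF mult_hom[OF xh yh] colon_zero[OF qpSpecD(4)[OF Q]]] by blast
      then have "x ^ k * y ^ k \<in> colon scale Q" by (simp add: power_mult_distrib)
      then have "(\<exists>n>0. (x ^ k) ^ n \<in> colon scale Q) \<or> (\<exists>n>0. (y ^ k) ^ n \<in> colon scale Q)"
        by (rule qp_prime[OF qpSpecD(1,2)[OF Q] pow_hom[OF xh] pow_hom[OF yh]])
      then show False
      proof
        assume "\<exists>n>0. (x ^ k) ^ n \<in> colon scale Q"
        then obtain n where n: "n > 0" "(x ^ k) ^ n \<in> colon scale Q" by blast
        have "(x ^ k) ^ n = gcomp Rg r g ^ (a * k * n)" unfolding x_def by (simp add: power_mult)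
        moreover have "a * k * n > 0" using a(1) k(1) n(1) by simp
        ultimately show False using g n(2) by metis
      next
        assume "\<exists>n>0. (y ^ k) ^ n \<in> colon scale Q"
        then obtain n where n: "n > 0" "(y ^ k) ^ n \<in> colon scale Q" by blast
        have "(y ^ k) ^ n = gcomp Rg s h ^ (b * k * n)" unfolding y_def by (simp add: power_mult)
        moreover have "b * k * n > 0" using b(1) k(1) n(1) by simp
        ultimately show False using h n(2) by metis
      qed
    qed
  qed
qed

end



context gctx begin

interpretation M: module scale by (rule md)
interpretation RR: module "(*) :: 'r \<Rightarrow> 'r \<Rightarrow> 'r" by (rule module_mult)

lemma part2:
  assumes Ks: "\<forall>i\<in>I. graded_submodule Mg scale (Ks i)"
  shows "qpSpec Rg Mg scale \<inter> (\<Inter>i\<in>I. qpV Rg Mg scale (Ks i))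
        = qpV Rg Mg scale (ideal_times_module scale (ideal_sum I (\<lambda>i. colon scale (Ks i))))"
proof -
  define J where "J = ideal_sum I (\<lambda>i. colon scale (Ks i))"
  define JM where "JM = ideal_times_module scale J"
  have Jdef: "J = RR.span (\<Union>i\<in>I. colon scale (Ks i))" unfolding J_def ideal_sum_def ..
  have JMdef: "JM = M.span {scale r m | r m. r \<in> J}" unfolding JM_def ideal_times_module_def ..
  have f1: "colon scale (Ks i) \<subseteq> J" if i: "i \<in> I" for i
  proof -
    have "colon scale (Ks i) \<subseteq> (\<Union>i\<in>I. colon scale (Ks i))" using i by blast
    also have "\<dots> \<subseteq> J" unfolding Jdef by (rule RR.span_superset)
    finally show ?thesis .
  qed
  have f2: "J \<subseteq> colon scale JM"
  proof
    fix r assume r: "r \<in> J"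
    have "scale r m \<in> JM" for m
    proof -
      have "scale r m \<in> {scale r m | r m. r \<in> J}" using r by blast
      then show ?thesis unfolding JMdef by (rule M.span_base)
    qed
    then show "r \<in> colon scale JM" unfolding colon_def by blast
  qed
  have f3: "colon scale JM \<subseteq> colon scale P"
    if P: "graded_prime_submodule Rg Mg scale P" and c: "\<And>i. i \<in> I \<Longrightarrow> colon scale (Ks i) \<subseteq> colon scale P" for P
  proof -
    have sP: "M.subspace P" using P unfolding graded_prime_submodule_def graded_submodule_def by blast
    have "(\<Union>i\<in>I. colon scale (Ks i)) \<subseteq> colon scale P" using c by blast
    then have JP: "J \<subseteq> colon scale P" unfolding Jdef by (rule RR.span_minimal[OF _ colon_ideal[OF sP]])
    have "{scale r m | r m. r \<in> J} \<subseteq> P"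
    proof
      fix x assume "x \<in> {scale r m | r m. r \<in> J}"
      then obtain r m where rm: "x = scale r m" "r \<in> J" by blast
      then have "r \<in> colon scale P" using JP by blast
      then show "x \<in> P" unfolding rm(1) colon_def by blast
    qed
    then have "JM \<subseteq> P" unfolding JMdef by (rule M.span_minimal[OF _ sP])
    then show ?thesis by (rule colon_mono)
  qed
  have "Q \<in> qpV Rg Mg scale JM" if Q: "Q \<in> qpSpec Rg Mg scale"
    and H: "\<forall>i\<in>I. Gr Rg (colon scale (Ks i)) \<subseteq> Gr Rg (colon scale Q)" for Q
  proof -
    have "r \<in> Gr Rg (colon scale Q)" if r: "r \<in> Gr Rg (colon scale JM)" for r
      unfolding Gr_def mem_Collect_eq
    proof (rule allI)
      fix g
      let ?x = "gcomp Rg r g"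
      have xh: "?x \<in> hom Rg" using gcomp_in[OF dR] by (auto simp: hom_iff)
      obtain n where n: "n > 0" "?x ^ n \<in> colon scale JM" using r unfolding Gr_def by blast
      show "\<exists>n>0. ?x ^ n \<in> colon scale Q"
      proof (rule ccontr)
        assume nx: "\<not> ?thesis"
        obtain P where P: "graded_prime_submodule Rg Mg scale P" "Q \<subseteq> P" "?x \<notin> colon scale P"
          using avoid[OF qpSpecD(3)[OF Q] qpSpecD(2)[OF Q] xh] nx by blast
        have sP: "M.subspace P" using P(1) unfolding graded_prime_submodule_def graded_submodule_def by blast
        have c: "colon scale (Ks i) \<subseteq> colon scale P" if i: "i \<in> I" for i
        proof
          fix z assume z: "z \<in> colon scale (Ks i)"
          have Ki: "graded_submodule Mg scale (Ks i)" using Ks i by blast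
          have sKi: "M.subspace (Ks i)" using Ki unfolding graded_submodule_def by blast
          show "z \<in> colon scale P"
          proof (rule in_from_comps[OF colon_ideal[OF sP]])
            fix h
            let ?z = "gcomp Rg z h"
            have zh: "?z \<in> hom Rg" using gcomp_in[OF dR] by (auto simp: hom_iff)
            have "?z \<in> colon scale (Ks i)" by (rule colon_graded[OF Ki z])
            then have "\<exists>n>0. ?z ^ n \<in> colon scale (Ks i)" by (intro exI[of _ 1]) simp
            then have "?z \<in> Gr Rg (colon scale (Ks i))" using Gr_hom[OF zh colon_zero[OF sKi]] by blast
            then have "?z \<in> Gr Rg (colon scale Q)" using H i by blast
            then obtain k where k: "k > 0" "?z ^ k \<in> colon scale Q"
              using Gr_hom[OF zh colon_zero[OF qpSpecD(4)[OF Q]]] by blast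
            have "?z ^ k \<in> colon scale P" using k(2) colon_mono[OF P(2)] by blast
            then show "?z \<in> colon scale P" by (rule prime_pow[OF P(1) zh])
          qed
        qed
        have "?x ^ n \<in> colon scale P" using n(2) f3[OF P(1) c] by blast
        then have "?x \<in> colon scale P" by (rule prime_pow[OF P(1) xh])
        then show False using P(3) by blast
      qed
    qed
    then show ?thesis unfolding qpV_def using Q by blast
  qed
  moreover have "Q \<in> qpV Rg Mg scale (Ks i)" if Q: "Q \<in> qpV Rg Mg scale JM" and i: "i \<in> I" for Q i
  proof -
    have "colon scale (Ks i) \<subseteq> colon scale JM" using f1[OF i] f2 by blast
    then have "Gr Rg (colon scale (Ks i)) \<subseteq> Gr Rg (colon scale JM)" by (rule Gr_mono)
    then show ?thesis using Q unfolding qpV_def by blast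
  qed
  moreover have "Q \<in> qpSpec Rg Mg scale" if "Q \<in> qpV Rg Mg scale JM" for Q
    using that unfolding qpV_def by blast
  ultimately have "qpSpec Rg Mg scale \<inter> (\<Inter>i\<in>I. qpV Rg Mg scale (Ks i)) = qpV Rg Mg scale JM"
  proof (intro equalityI subsetI)
    fix Q assume "Q \<in> qpSpec Rg Mg scale \<inter> (\<Inter>i\<in>I. qpV Rg Mg scale (Ks i))"
    then have "Q \<in> qpSpec Rg Mg scale" "\<forall>i\<in>I. Gr Rg (colon scale (Ks i)) \<subseteq> Gr Rg (colon scale Q)"
      unfolding qpV_def by blast+
    then show "Q \<in> qpV Rg Mg scale JM" by fact
  next
    fix Q assume Q: "Q \<in> qpV Rg Mg scale JM"
    have "Q \<in> qpSpec Rg Mg scale" using Q by fact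
    moreover have "Q \<in> (\<Inter>i\<in>I. qpV Rg Mg scale (Ks i))" using Q by (intro INT_I) fact
    ultimately show "Q \<in> qpSpec Rg Mg scale \<inter> (\<Inter>i\<in>I. qpV Rg Mg scale (Ks i))" by (rule IntI)
  qed
  then show ?thesis unfolding JM_def J_def .
qed

end

theorem theorem3p1:
  fixes Rg :: "'g::group_add \<Rightarrow> 'r::comm_ring_1 set"
    and Mg :: "'g \<Rightarrow> 'm::ab_group_add set"
    and scale :: "'r \<Rightarrow> 'm \<Rightarrow> 'm"
    and K N :: "'m set"
    and I :: "'i set"
    and Ks :: "'i \<Rightarrow> 'm set"
  assumes "graded_ring Rg"
    and "graded_module Rg Mg scale"
    and "graded_submodule Mg scale K"
    and "graded_submodule Mg scale N"
    and "\<forall>i\<in>I. graded_submodule Mg scale (Ks i)"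
  shows "qpV Rg Mg scale {0} = qpSpec Rg Mg scale
    \<and> qpV Rg Mg scale UNIV = {}
    \<and> qpSpec Rg Mg scale \<inter> (\<Inter>i\<in>I. qpV Rg Mg scale (Ks i))
        = qpV Rg Mg scale (ideal_times_module scale (ideal_sum I (\<lambda>i. colon scale (Ks i))))
    \<and> qpV Rg Mg scale N \<union> qpV Rg Mg scale K = qpV Rg Mg scale (N \<inter> K)"
proof -
  interpret gctx Rg Mg scale using assms(1,2) by unfold_locales
  show ?thesis by (intro conjI part1a part1b part2[OF assms(5)] part3[OF assms(4,3)])
qed



end
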